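(* Let $\Omega_n=\dfrac{\pi^{n/2}}{\Gamma\left(\frac n2+1\right)}$ and define \[ \theta(n)=\frac13+\frac{1}{18n}-\frac{31}{810n^2},\qquad \nu(n)=\theta(n)-\frac{139}{9720n^3}. \] Then \[ \frac{1}{\sqrt{\pi(n+\theta(n))}}\left(\frac{2\pi e}{n}\right)^{\frac n2}<\Omega_n \] for every integer $n\ge3$, and \[ \Omega_n<\frac{1}{\sqrt{\pi(n+\nu(n))}}\left(\frac{2\pi e}{n}\right)^{\frac n2} \] for every integer $n\ge1$.
   Context: $\Omega_n$ is the volume of the unit ball in $\mathbb{R}^n$; $\Gamma$ is Euler's gamma function. *)

theory Defs
  imports "HOL-Analysis.Analysis"
begin

definition Omega :: "nat \<Rightarrow> real" where
  "Omega n = pi powr (real n / 2) / Gamma (real n / 2 + 1)"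

definition theta :: "nat \<Rightarrow> real" where
  "theta n = 1/3 + 1 / (18 * real n) - 31 / (810 * (real n)^2)"

definition nu :: "nat \<Rightarrow> real" where
  "nu n = theta n - 139 / (9720 * (real n)^3)"

end

theory Submission
  imports Defs "HOL-Real_Asymp.Real_Asymp"
begin


definition PP :: "real \<Rightarrow> real" where "PP m = 810*m^3 + 270*m^2 + 45*m - 31"
definition PP1 :: "real \<Rightarrow> real" where "PP1 m = 2430*m^2 + 540*m + 45"
definition PP2 :: "real \<Rightarrow> real" where "PP2 m = 4860*m + 540"
definition QQ :: "real \<Rightarrow> real" where "QQ m = 9720*m^4 + 3240*m^3 + 540*m^2 - 372*m - 139"
definition QQ1 :: "real \<Rightarrow> real" where "QQ1 m = 38880*m^3 + 9720*m^2 + 1080*m - 372"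
definition QQ2 :: "real \<Rightarrow> real" where "QQ2 m = 116640*m^2 + 19440*m + 1080"
definition HposF :: "real \<Rightarrow> real" where "HposF t = 564368302623521828 + t * (3269556347488038012 + t * (3825457419556892520 + t * (2133555249799202760 + t * (694784887595315640 + t * (142425540411366600 + t * (18725120569425600 + t * (1538501161694400 + t * (72144887220000 + t * (1477405980000)))))))))"
definition HposG :: "real \<Rightarrow> real" where "HposG t = 372458686645310828804 + t * (2662540488318578139440 + t * (8540313740729398173696 + t * (16251420089833683732864 + t * (20428524017564438434464 + t * (17867007321846853171968 + t * (11147540567246756904960 + t * (4999506958679297955840 + t * (1600056303746054780160 + t * (356551636199427763200 + t * (52546150408799232000 + t * (4602008676424089600 + t * (181296718076160000))))))))))))"

lemma HF_id: "((PP2 (t+5) * PP (t+5) - (PP1 (t+5))^2) * (PP (t+7))^2 - (PP2 (t+7) * PP (t+7) - (PP1 (t+7))^2) * (PP (t+5))^2) * (t+5)^2 * (t+7)^2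
   + 2*(6*(t+5)+4) * (PP (t+5))^2 * (PP (t+7))^2 = HposF t"
  unfolding PP_def PP1_def PP2_def HposF_def by algebra

lemma HG_id: "((QQ2 (t+3) * QQ (t+3) - (QQ1 (t+3))^2) * (QQ (t+1))^2 - (QQ2 (t+1) * QQ (t+1) - (QQ1 (t+1))^2) * (QQ (t+3))^2) * (t+1)^2 * (t+3)^2
   - 2*(8*(t+1)+6) * (QQ (t+1))^2 * (QQ (t+3))^2 = HposG t"
  unfolding QQ_def QQ1_def QQ2_def HposG_def by algebra

lemma HposF_pos: "t \<ge> 0 \<Longrightarrow> HposF t > 0"
  unfolding HposF_def by (intro add_pos_nonneg mult_nonneg_nonneg) auto
lemma HposG_pos: "t \<ge> 0 \<Longrightarrow> HposG t > 0"
  unfolding HposG_def by (intro add_pos_nonneg mult_nonneg_nonneg) auto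

lemma PP_pos: assumes "m \<ge> 1" shows "PP m > 0"
proof -
  have "m^3 \<ge> 1" "m^2 \<ge> 1" using assms by (simp_all add: one_le_power)
  thus ?thesis unfolding PP_def using assms by linarith
qed

lemma QQ_pos: assumes "m \<ge> 1" shows "QQ m > 0"
proof -
  have "m^3 \<ge> 1" using assms by (simp add: one_le_power)
  hence "m*m^3 \<ge> m*1" using assms by (intro mult_left_mono) auto
  hence "m^4 \<ge> m" by (simp add: eval_nat_numeral)
  moreover have "m^3 \<ge> 0" "m^2 \<ge> 0" using assms by simp_all
  ultimately show ?thesis unfolding QQ_def using assms by linarith
qed

lemma DERIV_eqI: "(f has_real_derivative X) F \<Longrightarrow> X = Y \<Longrightarrow> (f has_real_derivative Y) F" by simp

lemma PP_deriv: "(PP has_real_derivative PP1 x) (at x within s)"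
proof -
  have "((\<lambda>x. 810*x^3 + 270*x^2 + 45*x - 31) has_real_derivative 810*(3*x^2) + 270*(2*x) + 45*1 - 0) (at x within s)"
    by (intro DERIV_diff DERIV_add DERIV_cmult DERIV_const DERIV_ident DERIV_pow[THEN DERIV_eqI]) simp_all
  thus ?thesis unfolding PP_def[abs_def] PP1_def by simp
qed
lemma PP1_deriv: "(PP1 has_real_derivative PP2 x) (at x within s)"
proof -
  have "((\<lambda>x. 2430*x^2 + 540*x + 45) has_real_derivative 2430*(2*x) + 540*1 + 0) (at x within s)"
    by (intro DERIV_diff DERIV_add DERIV_cmult DERIV_const DERIV_ident DERIV_pow[THEN DERIV_eqI]) simp_all
  thus ?thesis unfolding PP1_def[abs_def] PP2_def by simp
qed
lemma QQ_deriv: "(QQ has_real_derivative QQ1 x) (at x within s)"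
proof -
  have "((\<lambda>x. 9720*x^4 + 3240*x^3 + 540*x^2 - 372*x - 139) has_real_derivative 9720*(4*x^3) + 3240*(3*x^2) + 540*(2*x) - 372*1 - 0) (at x within s)"
    by (intro DERIV_diff DERIV_add DERIV_cmult DERIV_const DERIV_ident DERIV_pow[THEN DERIV_eqI]) simp_all
  thus ?thesis unfolding QQ_def[abs_def] QQ1_def by simp
qed
lemma QQ1_deriv: "(QQ1 has_real_derivative QQ2 x) (at x within s)"
proof -
  have "((\<lambda>x. 38880*x^3 + 9720*x^2 + 1080*x - 372) has_real_derivative 38880*(3*x^2) + 9720*(2*x) + 1080*1 - 0) (at x within s)"
    by (intro DERIV_diff DERIV_add DERIV_cmult DERIV_const DERIV_ident DERIV_pow[THEN DERIV_eqI]) simp_all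
  thus ?thesis unfolding QQ1_def[abs_def] QQ2_def by simp
qed

lemma dln: "x > 0 \<Longrightarrow> ((\<lambda>x. ln x) has_real_derivative 1/x) (at x)"
  by (rule DERIV_ln_divide)
lemma dln2: "x + 2 > 0 \<Longrightarrow> ((\<lambda>x. ln (x+2)) has_real_derivative 1/(x+2)) (at x)"
  using DERIV_shift[of ln "1/(x+2)" x 2] DERIV_ln_divide[of "x+2"] by simp
lemma dlnPP: "PP x > 0 \<Longrightarrow> ((\<lambda>x. ln (PP x)) has_real_derivative PP1 x / PP x) (at x)"
  using DERIV_chain2[OF DERIV_ln_divide PP_deriv, of x UNIV] by simp
lemma dlnPP2: "PP (x+2) > 0 \<Longrightarrow> ((\<lambda>x. ln (PP (x+2))) has_real_derivative PP1 (x+2) / PP (x+2)) (at x)"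
  using DERIV_shift[of "\<lambda>x. ln (PP x)" _ x 2] dlnPP[of "x+2"] by simp
lemma dlnQQ: "QQ x > 0 \<Longrightarrow> ((\<lambda>x. ln (QQ x)) has_real_derivative QQ1 x / QQ x) (at x)"
  using DERIV_chain2[OF DERIV_ln_divide QQ_deriv, of x UNIV] by simp
lemma dlnQQ2: "QQ (x+2) > 0 \<Longrightarrow> ((\<lambda>x. ln (QQ (x+2))) has_real_derivative QQ1 (x+2) / QQ (x+2)) (at x)"
  using DERIV_shift[of "\<lambda>x. ln (QQ x)" _ x 2] dlnQQ[of "x+2"] by simp
lemma dPPr: "PP x > 0 \<Longrightarrow> ((\<lambda>x. PP1 x / PP x) has_real_derivative (PP2 x * PP x - PP1 x * PP1 x)/(PP x * PP x)) (at x)"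
  by (rule DERIV_divide[OF PP1_deriv PP_deriv]) simp
lemma dPPr2: "PP (x+2) > 0 \<Longrightarrow> ((\<lambda>x. PP1 (x+2) / PP (x+2)) has_real_derivative (PP2 (x+2) * PP (x+2) - PP1 (x+2) * PP1 (x+2))/(PP (x+2) * PP (x+2))) (at x)"
  using DERIV_shift[of "\<lambda>x. PP1 x / PP x" _ x 2] dPPr[of "x+2"] by simp
lemma dQQr: "QQ x > 0 \<Longrightarrow> ((\<lambda>x. QQ1 x / QQ x) has_real_derivative (QQ2 x * QQ x - QQ1 x * QQ1 x)/(QQ x * QQ x)) (at x)"
  by (rule DERIV_divide[OF QQ1_deriv QQ_deriv]) simp
lemma dQQr2: "QQ (x+2) > 0 \<Longrightarrow> ((\<lambda>x. QQ1 (x+2) / QQ (x+2)) has_real_derivative (QQ2 (x+2) * QQ (x+2) - QQ1 (x+2) * QQ1 (x+2))/(QQ (x+2) * QQ (x+2))) (at x)"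
  using DERIV_shift[of "\<lambda>x. QQ1 x / QQ x" _ x 2] dQQr[of "x+2"] by simp
lemma drat: assumes "x > 0" shows "((\<lambda>x. (x - c)/x/(x+2)) has_real_derivative (2*c*x + 2*c - x^2)/x^2/(x+2)^2) (at x)"
proof -
  have "((\<lambda>x. (x - c)/(x*(x+2))) has_real_derivative ((1-0)*(x*(x+2)) - (x-c)*(1*(x+2)+(1+0)*x))/((x*(x+2))*(x*(x+2)))) (at x)"
    using assms apply (intro DERIV_divide DERIV_diff DERIV_ident DERIV_const)
    apply (rule DERIV_mult, rule DERIV_ident, rule DERIV_add, rule DERIV_ident, rule DERIV_const)
    by auto
  moreover have "((1-0)*(x*(x+2)) - (x-c)*(1*(x+2)+(1+0)*x))/((x*(x+2))*(x*(x+2))) = (2*c*x + 2*c - x^2)/x^2/(x+2)^2"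
    using assms by (simp add: field_simps power2_eq_square)
  ultimately show ?thesis by simp
qed

lemmas dbasic = DERIV_diff DERIV_add DERIV_cdivide DERIV_cmult DERIV_const DERIV_ident

definition Bf :: "real \<Rightarrow> real" where "Bf m = (ln (PP m) - ln 810 - 3 * ln m)/2"
definition Cf :: "real \<Rightarrow> real" where "Cf m = (ln (QQ m) - ln 9720 - 4 * ln m)/2"
definition Dd :: "real \<Rightarrow> real" where "Dd m = (m+1)/2 * (ln (m+2) - ln m) - 1"
definition fF :: "real \<Rightarrow> real" where "fF m = Bf m - Bf (m+2) - Dd m"
definition gG :: "real \<Rightarrow> real" where "gG m = Dd m - Cf m + Cf (m+2)"
definition fF1 :: "real \<Rightarrow> real" where
  "fF1 m = PP1 m / PP m / 2 - PP1 (m+2) / PP (m+2) / 2 - (ln (m+2) - ln m)/2 + (m-2)/m/(m+2)"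
definition gG1 :: "real \<Rightarrow> real" where
  "gG1 m = (ln (m+2) - ln m)/2 - (m-3)/m/(m+2) + QQ1 (m+2)/QQ (m+2)/2 - QQ1 m / QQ m/2"
definition fF2 :: "real \<Rightarrow> real" where
  "fF2 m = (PP2 m * PP m - PP1 m ^2)/PP m^2/2 - (PP2 (m+2)*PP(m+2) - PP1(m+2)^2)/PP(m+2)^2/2 + (6*m+4)/m^2/(m+2)^2"
definition gG2 :: "real \<Rightarrow> real" where
  "gG2 m = (QQ2 (m+2)*QQ(m+2) - QQ1(m+2)^2)/QQ(m+2)^2/2 - (QQ2 m * QQ m - QQ1 m^2)/QQ m^2/2 - (8*m+6)/m^2/(m+2)^2"

lemma fF_deriv: assumes "m \<ge> 1" shows "(fF has_real_derivative fF1 m) (at m)"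
proof -
  have p: "PP m > 0" "PP (m+2) > 0" "m \<noteq> 0" "m + 2 \<noteq> 0" "PP m \<noteq> 0" "PP (m+2) \<noteq> 0" "PP (m+2) > 0" using PP_pos[of m] PP_pos[of "m+2"] assms by auto
  define k where "k = m + 2"
  have k: "k \<noteq> 0" "m \<noteq> 0" "k > 0" "m > 0" using assms k_def by auto
  show ?thesis unfolding fF_def[abs_def] Bf_def Dd_def
  apply (rule DERIV_eqI)
   apply (rule dbasic dlnPP dlnPP2 dln dln2 DERIV_mult | (use p assms in simp; fail))+
    apply (unfold fF1_def k_def[symmetric])
    apply (simp add: field_simps k)
    unfolding k_def by algebra
qed

lemma gG_deriv: assumes "m \<ge> 1" shows "(gG has_real_derivative gG1 m) (at m)"
proof -
  have p: "QQ m > 0" "QQ (m+2) > 0" "m \<noteq> 0" "m + 2 \<noteq> 0" "QQ m \<noteq> 0" "QQ (m+2) \<noteq> 0" using QQ_pos[of m] QQ_pos[of "m+2"] assms by auto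
  define k where "k = m + 2"
  have k: "k \<noteq> 0" "m \<noteq> 0" "k > 0" "m > 0" using assms k_def by auto
  show ?thesis unfolding gG_def[abs_def] Cf_def Dd_def
  apply (rule DERIV_eqI)
   apply (rule dbasic dlnQQ dlnQQ2 dln dln2 DERIV_mult | (use p assms in simp; fail))+
    apply (unfold gG1_def k_def[symmetric])
    apply (simp add: field_simps k)
    unfolding k_def by algebra
qed

lemma fF1_deriv: assumes "m \<ge> 1" shows "(fF1 has_real_derivative fF2 m) (at m)"
proof -
  have p: "PP m > 0" "PP (m+2) > 0" "m \<noteq> 0" "m + 2 \<noteq> 0" "PP m \<noteq> 0" "PP (m+2) \<noteq> 0" "PP (m+2) > 0" using PP_pos[of m] PP_pos[of "m+2"] assms by auto
  define k where "k = m + 2"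
  have k: "k \<noteq> 0" "m \<noteq> 0" "k > 0" "m > 0" using assms k_def by auto
  show ?thesis unfolding fF1_def[abs_def]
  apply (rule DERIV_eqI)
   apply (rule dbasic dPPr dPPr2 dln dln2 drat | (use p assms in simp; fail))+
    apply (unfold fF2_def k_def[symmetric])
    apply (simp add: field_simps k)
    unfolding k_def by algebra
qed

lemma gG1_deriv: assumes "m \<ge> 1" shows "(gG1 has_real_derivative gG2 m) (at m)"
proof -
  have p: "QQ m > 0" "QQ (m+2) > 0" "m \<noteq> 0" "m + 2 \<noteq> 0" "QQ m \<noteq> 0" "QQ (m+2) \<noteq> 0" using QQ_pos[of m] QQ_pos[of "m+2"] assms by auto
  define k where "k = m + 2"
  have k: "k \<noteq> 0" "m \<noteq> 0" "k > 0" "m > 0" using assms k_def by auto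
  show ?thesis unfolding gG1_def[abs_def]
  apply (rule DERIV_eqI)
   apply (rule dbasic dQQr dQQr2 dln dln2 drat | (use p assms in simp; fail))+
    apply (unfold gG2_def k_def[symmetric])
    apply (simp add: field_simps k)
    unfolding k_def by algebra
qed

lemma fF2_pos: assumes "m \<ge> 5" shows "fF2 m > 0"
proof -
  define k where "k = m + 2"
  have pos: "m > 0" "k > 0" "PP m > 0" "PP k > 0" using assms PP_pos[of m] PP_pos[of k] k_def by auto
  have e: "fF2 m * (2 * (PP m)^2 * (PP k)^2 * m^2 * k^2) = ((PP2 m * PP m - (PP1 m)^2) * (PP k)^2 - (PP2 k * PP k - (PP1 k)^2) * (PP m)^2) * m^2 * k^2 + 2*(6*m+4) * (PP m)^2 * (PP k)^2"
    unfolding fF2_def k_def[symmetric] using pos by (simp add: field_simps)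
  also have "\<dots> = HposF (m-5)" using HF_id[of "m-5"] unfolding k_def by (simp add: add.commute)
  finally have "fF2 m * (2 * (PP m)^2 * (PP k)^2 * m^2 * k^2) > 0" using HposF_pos[of "m-5"] assms by simp
  moreover have "2 * (PP m)^2 * (PP k)^2 * m^2 * k^2 > 0" using pos by simp
  ultimately show ?thesis by (rule zero_less_mult_pos2)
qed

lemma gG2_pos: assumes "m \<ge> 1" shows "gG2 m > 0"
proof -
  define k where "k = m + 2"
  have pos: "m > 0" "k > 0" "QQ m > 0" "QQ k > 0" using assms QQ_pos[of m] QQ_pos[of k] k_def by auto
  have e: "gG2 m * (2 * (QQ m)^2 * (QQ k)^2 * m^2 * k^2) = ((QQ2 k * QQ k - (QQ1 k)^2) * (QQ m)^2 - (QQ2 m * QQ m - (QQ1 m)^2) * (QQ k)^2) * m^2 * k^2 - 2*(8*m+6) * (QQ m)^2 * (QQ k)^2"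
    unfolding gG2_def k_def[symmetric] using pos by (simp add: field_simps)
  also have "\<dots> = HposG (m-1)" using HG_id[of "m-1"] unfolding k_def by (simp add: add.commute)
  finally have "gG2 m * (2 * (QQ m)^2 * (QQ k)^2 * m^2 * k^2) > 0" using HposG_pos[of "m-1"] assms by simp
  moreover have "2 * (QQ m)^2 * (QQ k)^2 * m^2 * k^2 > 0" using pos by simp
  ultimately show ?thesis by (rule zero_less_mult_pos2)
qed

lemma neg_if_deriv_pos:
  fixes g g' :: "real \<Rightarrow> real"
  assumes d: "\<And>x. x \<ge> a \<Longrightarrow> (g has_real_derivative g' x) (at x)"
    and p: "\<And>x. x \<ge> a \<Longrightarrow> g' x > 0" and l: "(g \<longlongrightarrow> 0) at_top" and x: "x \<ge> a"
  shows "g x < 0"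
proof -
  have lt: "g y < g z" if "a \<le> y" "y < z" for y z
  proof (rule DERIV_pos_imp_increasing[OF that(2)])
    fix t assume t: "y \<le> t" "t \<le> z"
    hence ta: "t \<ge> a" using that by simp
    show "\<exists>d. (g has_real_derivative d) (at t) \<and> d > 0" using d[OF ta] p[OF ta] by blast
  qed
  have "g (x+1) \<le> 0"
  proof (rule tendsto_lowerbound[OF l])
    show "\<forall>\<^sub>F i in at_top. g (x + 1) \<le> g i"
      unfolding eventually_at_top_linorder
    proof (rule exI[of _ "x+1"], intro allI impI)
      fix i assume i: "x + 1 \<le> i"
      show "g (x + 1) \<le> g i"
      proof (cases "i = x + 1")
        case False
        then show ?thesis using lt[of "x+1" i] i x by simp
      qed simp
    qed
  qed simp
  with lt[of x "x+1"] x show ?thesis by simp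
qed

lemma fF_lim: "(fF \<longlongrightarrow> 0) at_top"
  unfolding fF_def[abs_def] Bf_def Dd_def PP_def by real_asymp
lemma fF1_lim: "(fF1 \<longlongrightarrow> 0) at_top"
  unfolding fF1_def[abs_def] PP1_def PP_def by real_asymp
lemma gG_lim: "(gG \<longlongrightarrow> 0) at_top"
  unfolding gG_def[abs_def] Cf_def Dd_def QQ_def by real_asymp
lemma gG1_lim: "(gG1 \<longlongrightarrow> 0) at_top"
  unfolding gG1_def[abs_def] QQ1_def QQ_def by real_asymp

lemma fF_pos: assumes "m \<ge> 5" shows "fF m > 0"
proof -
  have n1: "fF1 x < 0" if "x \<ge> 5" for x
    by (rule neg_if_deriv_pos[of 5 fF1 fF2]) (use fF1_deriv fF2_pos fF1_lim that in auto)
  have "(\<lambda>x. - fF x) m < 0"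
  proof (rule neg_if_deriv_pos[of 5 "\<lambda>x. - fF x" "\<lambda>x. - fF1 x" m])
    show "((\<lambda>x. - fF x) has_real_derivative - fF1 x) (at x)" if "5 \<le> x" for x
      using fF_deriv[of x] that by (auto intro: DERIV_minus)
  next
    show "0 < - fF1 x" if "5 \<le> x" for x using n1[OF that] by simp
  next
    show "((\<lambda>x. - fF x) \<longlongrightarrow> 0) at_top" using tendsto_minus[OF fF_lim] by simp
  qed (rule assms)
  thus ?thesis by simp
qed

lemma gG_pos: assumes "m \<ge> 1" shows "gG m > 0"
proof -
  have n1: "gG1 x < 0" if "x \<ge> 1" for x
    by (rule neg_if_deriv_pos[of 1 gG1 gG2]) (use gG1_deriv gG2_pos gG1_lim that in auto)
  have "(\<lambda>x. - gG x) m < 0"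
  proof (rule neg_if_deriv_pos[of 1 "\<lambda>x. - gG x" "\<lambda>x. - gG1 x" m])
    show "((\<lambda>x. - gG x) has_real_derivative - gG1 x) (at x)" if "1 \<le> x" for x
      using gG_deriv[of x] that by (auto intro: DERIV_minus)
  next
    show "0 < - gG1 x" if "1 \<le> x" for x using n1[OF that] by simp
  next
    show "((\<lambda>x. - gG x) \<longlongrightarrow> 0) at_top" using tendsto_minus[OF gG_lim] by simp
  qed (rule assms)
  thus ?thesis by simp
qed



definition SS :: "real \<Rightarrow> real" where
  "SS m = ln (Gamma (m/2+1)) - (m+1)/2 * ln (m/2) + m/2 - ln (2*pi)/2"

lemma SS_step: assumes "m > 0" shows "SS m - SS (m+2) = Dd m"
proof -
  have nz: "m/2+1 \<notin> \<int>\<^sub>\<le>\<^sub>0" using assms by (auto dest: nonpos_Ints_nonpos)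
  have e: "(m+2)/2+1 = (m/2+1)+1" by simp
  have g: "Gamma ((m+2)/2+1) = (m/2+1) * Gamma (m/2+1)"
    unfolding e by (rule Gamma_plus1[OF nz])
  have gp: "Gamma (m/2+1) > 0" using assms by simp
  have l1: "ln (Gamma ((m+2)/2+1)) = ln (m/2+1) + ln (Gamma (m/2+1))"
    unfolding g by (rule ln_mult_pos) (use assms gp in auto)
  have l2: "ln (m/2+1) = ln (m+2) - ln 2"
    using assms ln_div[of "m+2" 2] by (simp add: add_divide_distrib)
  have l3: "ln ((m+2)/2) = ln (m+2) - ln 2" using assms by (simp add: ln_div)
  have l4: "ln (m/2) = ln m - ln 2" using assms by (simp add: ln_div)
  show ?thesis unfolding SS_def Dd_def l1 l2 l3 l4
    by (simp add: field_simps)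
qed

lemma Cf_le_Bf: assumes "m \<ge> 1" shows "Cf m \<le> Bf m"
proof -
  have q: "QQ m = 12*m*PP m - 139" unfolding QQ_def PP_def by algebra
  have pp: "PP m > 0" "QQ m > 0" using PP_pos QQ_pos assms by auto
  have "ln (QQ m) \<le> ln (12*m*PP m)" using pp q assms by simp
  also have "ln (12*m*PP m) = ln 12 + ln m + ln (PP m)" using pp assms by (simp add: ln_mult)
  finally have a: "ln (QQ m) \<le> ln 12 + ln m + ln (PP m)" .
  have b: "ln (9720::real) = ln 12 + ln 810" using ln_mult[of 12 810] by simp
  show ?thesis unfolding Cf_def Bf_def using a b by simp
qed

lemma Bf_lim: "(Bf \<longlongrightarrow> 0) at_top"
  unfolding Bf_def[abs_def] PP_def by real_asymp
lemma Cf_lim: "(Cf \<longlongrightarrow> 0) at_top"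
  unfolding Cf_def[abs_def] QQ_def by real_asymp

lemma seq_to0: assumes "(f \<longlongrightarrow> 0) at_top" shows "(\<lambda>k::nat. f (m0 + 2*real k)) \<longlonglongrightarrow> 0"
proof (rule filterlim_compose[OF assms])
  show "filterlim (\<lambda>k. m0 + 2 * real k) at_top sequentially"
    by (intro filterlim_tendsto_add_at_top[OF tendsto_const] filterlim_tendsto_pos_mult_at_top[OF tendsto_const]
        filterlim_real_sequentially) auto
qed

lemma conv: assumes "m0 \<ge> 5" shows "\<exists>L. (\<lambda>k. SS (m0 + 2*real k)) \<longlonglongrightarrow> L"
proof -
  define u where "u k = SS (m0 + 2*real k) - Cf (m0 + 2*real k)" for k
  define v where "v k = SS (m0 + 2*real k) - Bf (m0 + 2*real k)" for k
  have st: "m0 + 2*real (Suc k) = (m0 + 2*real k) + 2" for k by simp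
  have ge: "m0 + 2*real k \<ge> 5" for k using assms by simp
  have "decseq u"
  proof (rule decseq_SucI)
    fix k
    have "SS (m0 + 2*real k) - SS (m0 + 2*real k + 2) = Dd (m0 + 2*real k)"
      by (rule SS_step) (use ge[of k] in simp)
    moreover have "gG (m0 + 2*real k) > 0" by (rule gG_pos) (use ge[of k] in simp)
    ultimately show "u (Suc k) \<le> u k" unfolding u_def st gG_def by simp
  qed
  have "incseq v"
  proof (rule incseq_SucI)
    fix k
    have "SS (m0 + 2*real k) - SS (m0 + 2*real k + 2) = Dd (m0 + 2*real k)"
      by (rule SS_step) (use ge[of k] in simp)
    moreover have "fF (m0 + 2*real k) > 0" by (rule fF_pos) (use ge[of k] in simp)
    ultimately show "v k \<le> v (Suc k)" unfolding v_def st fF_def by simp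
  qed
  have "v 0 \<le> u k" for k
  proof -
    have "v 0 \<le> v k" using \<open>incseq v\<close> by (simp add: incseq_def)
    moreover have "v k \<le> u k" unfolding u_def v_def using Cf_le_Bf[of "m0 + 2*real k"] ge[of k] by simp
    ultimately show ?thesis by simp
  qed
  then obtain L where L: "u \<longlonglongrightarrow> L" using decseq_convergent[OF \<open>decseq u\<close>] by blast
  have "(\<lambda>k. u k + Cf (m0 + 2*real k)) \<longlonglongrightarrow> L + 0"
    by (intro tendsto_add L seq_to0 Cf_lim)
  thus ?thesis unfolding u_def by auto
qed

lemma dup_real: fixes z :: real assumes "z > 0"
  shows "Gamma z * Gamma (z + 1/2) = exp ((1 - 2*z) * ln 2) * sqrt pi * Gamma (2*z)"
proof -
  have e: "complex_of_real z + 1/2 = complex_of_real (z + 1/2)" by simp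
  have nz: "complex_of_real z \<notin> \<int>\<^sub>\<le>\<^sub>0" "complex_of_real z + 1/2 \<notin> \<int>\<^sub>\<le>\<^sub>0"
    unfolding e of_real_in_nonpos_Ints_iff using assms
    by (auto dest: nonpos_Ints_nonpos)
  from Gamma_legendre_duplication[OF nz]
  have "complex_of_real (Gamma z * Gamma (z + 1/2)) = complex_of_real (exp ((1 - 2*z) * ln 2) * sqrt pi * Gamma (2*z))"
    by (simp add: Gamma_complex_of_real[symmetric] exp_of_real[symmetric])
  thus ?thesis by (simp only: of_real_eq_iff)
qed


lemma SS_alt: assumes "m > 0" "g = m/2+1"
  shows "SS m = ln (Gamma g) - (m+1)/2 * (ln m - ln 2) + m/2 - (ln 2 + ln pi)/2"
  unfolding SS_def assms(2) using assms(1) by (simp add: ln_div ln_mult)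

lemma link: "(\<lambda>j::nat. SS (2*real j + 1) - SS (2*real j)) \<longlonglongrightarrow> 0"
proof -
  define A where "A j = ln (Gamma (real j + 3/2)) - ln (fact j) - ln (real j)/2" for j :: nat
  define B where "B j = ln (real j)/2 + (real j + 1/2) * (ln (2*real j) - ln 2) - (real j + 1) * (ln (2*real j+1) - ln 2) + 1/2" for j :: nat
  have eq: "SS (2*real j + 1) - SS (2*real j) = A j + B j" if "j > 0" for j
  proof -
    have s1: "SS (2*real j + 1) = ln (Gamma (real j + 3/2)) - (2*real j+1+1)/2 * (ln (2*real j+1) - ln 2) + (2*real j+1)/2 - (ln 2 + ln pi)/2"
      by (rule SS_alt) (use that in \<open>auto simp: field_simps\<close>)
    have s2: "SS (2*real j) = ln (Gamma (1 + real j)) - (2*real j+1)/2 * (ln (2*real j) - ln 2) + (2*real j)/2 - (ln 2 + ln pi)/2"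
      by (rule SS_alt) (use that in \<open>auto simp: field_simps\<close>)
    show ?thesis unfolding s1 s2 A_def B_def Gamma_fact by (simp add: field_simps)
  qed
  have pos: "Gamma (1/2::real) > 0" by simp
  have ge: "Gamma_series (1/2::real) j / Gamma (1/2) = exp (- A j)" if "j > 0" for j
  proof -
    have gp: "Gamma (real j + 3/2) > 0" by simp
    have r: "rGamma (1/2::real) = pochhammer (1/2) (j+1) * rGamma (1/2 + of_nat (j+1))"
      by (rule pochhammer_rGamma)
    have e1: "1/2 + real (j+1) = real j + 3/2" by simp
    have poch: "pochhammer (1/2::real) (j+1) = Gamma (real j + 3/2) / Gamma (1/2)"
      using r pos gp unfolding e1 rGamma_inverse_Gamma by (simp add: field_simps less_imp_neq[OF pos, symmetric])
    have "- A j = ln (fact j) + ln (real j)/2 - ln (Gamma (real j + 3/2))" unfolding A_def by simp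
    hence "exp (- A j) = exp (ln (fact j)) * exp (ln (real j)/2) / exp (ln (Gamma (real j + 3/2)))"
      by (simp add: exp_add exp_diff)
    also have "\<dots> = fact j * exp (ln (real j)/2) / Gamma (real j + 3/2)"
      using gp by (simp add: exp_ln fact_gt_zero)
    finally have "exp (- A j) = fact j * exp (ln (real j)/2) / Gamma (real j + 3/2)" .
    moreover have "Gamma_series (1/2::real) j = fact j * exp (ln (real j)/2) / pochhammer (1/2) (j+1)"
      unfolding Gamma_series_def by simp
    ultimately show ?thesis unfolding poch using pos gp by (simp add: field_simps less_imp_neq[OF pos, symmetric])
  qed
  have "(\<lambda>j. Gamma_series (1/2::real) j / Gamma (1/2)) \<longlonglongrightarrow> Gamma (1/2) / Gamma (1/2)"
    by (intro tendsto_divide Gamma_series_LIMSEQ tendsto_const) (use less_imp_neq[OF pos] in auto)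
  hence l1: "(\<lambda>j. Gamma_series (1/2::real) j / Gamma (1/2)) \<longlonglongrightarrow> 1" using pos by simp
  have "(\<lambda>j. exp (- A j)) \<longlonglongrightarrow> 1"
    by (rule Lim_transform_eventually[OF l1], rule eventually_mono[OF eventually_gt_at_top[of "0::nat"]], rule ge)
  hence "(\<lambda>j. ln (exp (- A j))) \<longlonglongrightarrow> ln 1" by (intro tendsto_ln) auto
  hence "(\<lambda>j. - A j) \<longlonglongrightarrow> 0" by simp
  hence A0: "A \<longlonglongrightarrow> 0" using tendsto_minus[of "\<lambda>j. - A j" 0] by simp
  have B0: "B \<longlonglongrightarrow> 0" unfolding B_def by real_asymp
  have AB: "(\<lambda>j. A j + B j) \<longlonglongrightarrow> 0" using tendsto_add[OF A0 B0] by simp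
  show ?thesis
    by (rule Lim_transform_eventually[OF AB], rule eventually_mono[OF eventually_gt_at_top[of "0::nat"]]) (simp add: eq)
qed


lemma dup_lim: "(\<lambda>j::nat. SS (2*real j) + SS (2*real j + 1) - SS (4*real j + 2)) \<longlonglongrightarrow> 0"
proof -
  define T where "T j = (real j + 1/2) * ln (1 + 1/(2*real j)) - 1/2" for j::nat
  have eq: "SS (2*real j) + SS (2*real j + 1) - SS (4*real j + 2) = T j" if "j > 0" for j
  proof -
    have s1: "SS (2*real j) = ln (Gamma (real j + 1)) - (2*real j+1)/2*(ln (2*real j) - ln 2) + (2*real j)/2 - (ln 2 + ln pi)/2"
      by (rule SS_alt) (use that in \<open>auto simp: field_simps\<close>)
    have s2: "SS (2*real j + 1) = ln (Gamma (real j + 1 + 1/2)) - (2*real j+1+1)/2*(ln (2*real j+1) - ln 2) + (2*real j+1)/2 - (ln 2 + ln pi)/2"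
      by (rule SS_alt) (use that in \<open>auto simp: field_simps\<close>)
    have s3: "SS (4*real j + 2) = ln (Gamma (2*(real j + 1))) - (4*real j+2+1)/2*(ln (4*real j+2) - ln 2) + (4*real j+2)/2 - (ln 2 + ln pi)/2"
      by (rule SS_alt) (use that in \<open>auto simp: field_simps\<close>)
    have d: "Gamma (real j + 1) * Gamma (real j + 1 + 1/2) = exp ((1 - 2*(real j+1)) * ln 2) * sqrt pi * Gamma (2*(real j+1))"
      by (rule dup_real) simp
    have p1: "Gamma (real j + 1) > 0" "Gamma (real j + 1 + 1/2) > 0" "Gamma (2*(real j+1)) > 0" by simp_all
    have "ln (Gamma (real j + 1)) + ln (Gamma (real j + 1 + 1/2)) = ln (Gamma (real j + 1) * Gamma (real j + 1 + 1/2))"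
      using p1 by (simp add: ln_mult_pos)
    also have "\<dots> = ln (exp ((1 - 2*(real j+1)) * ln 2) * sqrt pi * Gamma (2*(real j+1)))" unfolding d ..
    also have "\<dots> = (1 - 2*(real j+1)) * ln 2 + ln pi / 2 + ln (Gamma (2*(real j+1)))"
      using p1 by (simp add: ln_mult_pos ln_sqrt)
    finally have ld: "ln (Gamma (real j + 1 + 1/2)) = (1 - 2*(real j+1)) * ln 2 + ln pi / 2 + ln (Gamma (2*(real j+1))) - ln (Gamma (real j + 1))"
      by linarith
    have r1: "ln (2*real j) = ln 2 + ln (real j)" using that by (simp add: ln_mult)
    have r2: "ln (4*real j + 2) = ln 2 + ln (2*real j + 1)"
      using ln_mult[of 2 "2*real j + 1"] by (simp add: algebra_simps)
    have r3: "ln (1 + 1/(2*real j)) = ln (2*real j + 1) - ln 2 - ln (real j)"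
    proof -
      have "1 + 1/(2*real j) = (2*real j + 1) / (2 * real j)" using that by (simp add: field_simps)
      thus ?thesis using that by (simp add: ln_div ln_mult)
    qed
    show ?thesis unfolding s1 s2 s3 ld T_def r1 r2 r3 by (simp add: field_simps)
  qed
  have T0: "T \<longlonglongrightarrow> 0" unfolding T_def by real_asymp
  show ?thesis
    by (rule Lim_transform_eventually[OF T0], rule eventually_mono[OF eventually_gt_at_top[of "0::nat"]]) (simp add: eq)
qed


lemma SS_lim_nat: assumes "n \<ge> 1" shows "(\<lambda>k. SS (real n + 2*real k)) \<longlonglongrightarrow> 0"
proof -
  obtain Le where E: "(\<lambda>k. SS (6 + 2*real k)) \<longlonglongrightarrow> Le" using conv[of 6] by auto
  obtain Lo where O: "(\<lambda>k. SS (5 + 2*real k)) \<longlonglongrightarrow> Lo" using conv[of 5] by auto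
  have Ef: "(\<lambda>j. SS (2*real j)) \<longlonglongrightarrow> Le"
  proof (rule LIMSEQ_offset[where k=3])
    have "(\<lambda>n. SS (2 * real (n + 3))) = (\<lambda>k. SS (6 + 2*real k))" by (simp add: algebra_simps)
    thus "(\<lambda>n. SS (2 * real (n + 3))) \<longlonglongrightarrow> Le" using E by simp
  qed
  have Of: "(\<lambda>j. SS (2*real j + 1)) \<longlonglongrightarrow> Lo"
  proof (rule LIMSEQ_offset[where k=2])
    have "(\<lambda>n. SS (2 * real (n + 2) + 1)) = (\<lambda>k. SS (5 + 2*real k))" by (simp add: algebra_simps)
    thus "(\<lambda>n. SS (2 * real (n + 2) + 1)) \<longlonglongrightarrow> Lo" using O by simp
  qed
  have "(\<lambda>j. SS (2*real j + 1) - SS (2*real j)) \<longlonglongrightarrow> Lo - Le" by (intro tendsto_diff Of Ef)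
  with link have eqL: "Lo - Le = 0" using LIMSEQ_unique by blast
  have "((\<lambda>j. SS (2*real j)) \<circ> (\<lambda>j. 2*j+1)) \<longlonglongrightarrow> Le"
    by (rule LIMSEQ_subseq_LIMSEQ[OF Ef]) (simp add: strict_mono_def)
  moreover have "((\<lambda>j. SS (2*real j)) \<circ> (\<lambda>j. 2*j+1)) = (\<lambda>j. SS (4*real j + 2))"
    by (simp add: o_def algebra_simps)
  ultimately have sub: "(\<lambda>j. SS (4*real j + 2)) \<longlonglongrightarrow> Le" by simp
  have "(\<lambda>j. SS (2*real j) + SS (2*real j + 1) - SS (4*real j + 2)) \<longlonglongrightarrow> Le + Lo - Le"
    by (intro tendsto_diff tendsto_add Ef Of sub)
  with dup_lim have "Le + Lo - Le = 0" using LIMSEQ_unique by blast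
  hence L0: "Lo = 0" "Le = 0" using eqL by auto
  obtain a where a: "n = 2*a \<or> n = 2*a + 1" by (metis dvd_mult_div_cancel odd_two_times_div_two_succ)
  thus ?thesis
  proof
    assume n: "n = 2*a"
    have "(\<lambda>k. SS (2*real (k + a))) \<longlonglongrightarrow> 0" using LIMSEQ_ignore_initial_segment[OF Ef, of a] L0 by simp
    moreover have "(\<lambda>k. SS (2*real (k + a))) = (\<lambda>k. SS (real n + 2*real k))" using n by (simp add: algebra_simps)
    ultimately show ?thesis by simp
  next
    assume n: "n = 2*a + 1"
    have "(\<lambda>k. SS (2*real (k + a) + 1)) \<longlonglongrightarrow> 0" using LIMSEQ_ignore_initial_segment[OF Of, of a] L0 by simp
    moreover have "(\<lambda>k. SS (2*real (k + a) + 1)) = (\<lambda>k. SS (real n + 2*real k))" using n by (simp add: algebra_simps)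
    ultimately show ?thesis by simp
  qed
qed

lemma SS_lt_Bf: assumes "n \<ge> 5" shows "SS (real n) < Bf (real n)"
proof -
  define h where "h k = SS (real n + 2*real k) - Bf (real n + 2*real k)" for k
  have st: "real n + 2*real (Suc k) = (real n + 2*real k) + 2" for k by simp
  have ge: "real n + 2*real k \<ge> 5" for k using assms by simp
  have inc: "h k < h (Suc k)" for k
  proof -
    have "SS (real n + 2*real k) - SS (real n + 2*real k + 2) = Dd (real n + 2*real k)"
      by (rule SS_step) (use ge[of k] in simp)
    moreover have "fF (real n + 2*real k) > 0" by (rule fF_pos) (use ge[of k] in simp)
    ultimately show ?thesis unfolding h_def st fF_def by simp
  qed
  have "incseq h" using inc by (intro incseq_SucI) (simp add: less_imp_le)
  have "h \<longlonglongrightarrow> 0 - 0" unfolding h_def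
    by (intro tendsto_diff SS_lim_nat seq_to0 Bf_lim) (use assms in simp)
  hence "h 1 \<le> 0" using incseq_le[OF \<open>incseq h\<close>] by simp
  with inc[of 0] have "h 0 < 0" by simp
  thus ?thesis unfolding h_def by simp
qed

lemma Cf_lt_SS: assumes "n \<ge> 1" shows "Cf (real n) < SS (real n)"
proof -
  define h where "h k = SS (real n + 2*real k) - Cf (real n + 2*real k)" for k
  have st: "real n + 2*real (Suc k) = (real n + 2*real k) + 2" for k by simp
  have ge: "real n + 2*real k \<ge> 1" for k using assms by simp
  have dec: "h (Suc k) < h k" for k
  proof -
    have "SS (real n + 2*real k) - SS (real n + 2*real k + 2) = Dd (real n + 2*real k)"
      by (rule SS_step) (use ge[of k] in simp)
    moreover have "gG (real n + 2*real k) > 0" by (rule gG_pos) (use ge[of k] in simp)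
    ultimately show ?thesis unfolding h_def st gG_def by simp
  qed
  have "decseq h" using dec by (intro decseq_SucI) (simp add: less_imp_le)
  have "h \<longlonglongrightarrow> 0 - 0" unfolding h_def
    by (intro tendsto_diff SS_lim_nat seq_to0 Cf_lim) (use assms in simp)
  hence "0 \<le> h 1" using decseq_ge[OF \<open>decseq h\<close>] by simp
  with dec[of 0] have "0 < h 0" by simp
  thus ?thesis unfolding h_def by simp
qed

lemma e_upper: "exp (1::real) \<le> 5837465777 / 2147483648 + inverse (2 ^ 32)"
proof -
  have "exp 1 - 5837465777 / 2147483648 \<le> inverse (2 ^ 32::real)" by (rule abs_le_D1[OF e_approx_32])
  thus ?thesis by linarith
qed

lemma lin_aux3: fixes x y p q r s t :: real
  assumes "3 + p < q" "p = r + s - t" "x - y = (3 + r + s - t - q)/2" shows "x < y"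
  using assms by argo

lemma lin_aux4: fixes x y p q r s t u v :: real
  assumes "4 + p < q + r" "p = s + t" "x - y = (4 + 2*u + t - q - r)/2" "s = 2*u" shows "x < y"
  using assms by argo

lemma SS3: "SS 3 < Bf 3"
proof -
  have g32: "Gamma (3/2::real) = 1/2 * sqrt pi"
  proof -
    have "(1/2::real) \<notin> \<int>\<^sub>\<le>\<^sub>0" using nonpos_Ints_nonpos by force
    from Gamma_plus1[OF this] show ?thesis using Gamma_one_half_real by simp
  qed
  have g52: "Gamma (5/2::real) = 3/4 * sqrt pi"
  proof -
    have "(3/2::real) \<notin> \<int>\<^sub>\<le>\<^sub>0" using nonpos_Ints_nonpos by force
    from Gamma_plus1[OF this] show ?thesis using g32 by simp
  qed
  have s: "SS 3 = ln (Gamma (5/2)) - (3+1)/2 * (ln 3 - ln 2) + 3/2 - (ln 2 + ln pi)/2"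
    by (rule SS_alt) simp_all
  have lg: "ln (Gamma (5/2::real)) = ln 3 - 2 * ln 2 + ln pi / 2"
  proof -
    have "ln (Gamma (5/2::real)) = ln (3/4) + ln (sqrt pi)" unfolding g52 by (rule ln_mult_pos) simp_all
    also have "ln (3/4::real) = ln 3 - ln 4" by (simp add: ln_div)
    also have "ln (4::real) = 2 * ln 2" using ln_realpow[of 2 2] by simp
    finally show ?thesis by (simp add: ln_sqrt)
  qed
  have pp: "PP 3 = 24404" unfolding PP_def by simp
  have "exp 3 = exp (1::real) ^ 3" using exp_of_nat_mult[of 3 "1::real"] by simp
  also have "\<dots> \<le> (5837465777 / 2147483648 + inverse (2 ^ 32)) ^ 3"
    by (rule power_mono[OF e_upper]) simp
  finally have "exp 3 * 1215 < (24404::real)" by (simp add: power_divide)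
  hence "ln (exp 3 * 1215) < ln (24404::real)" by simp
  hence "3 + ln 1215 < ln (24404::real)" by (simp add: ln_mult)
  moreover have "ln (1215::real) = ln 3 + ln 810 - ln 2"
  proof -
    have a: "ln (1215::real) = ln (3 * 810) - ln 2" using ln_div[of "3*810" "2::real"] by simp
    have b: "ln (3 * 810::real) = ln 3 + ln 810" using ln_mult_pos[of 3 "810::real"] by simp
    show ?thesis using a b by simp
  qed
  moreover have "SS 3 - Bf 3 = (3 + ln 3 + ln 810 - ln 2 - ln 24404)/2"
    unfolding s lg Bf_def pp by (simp add: field_simps)
  ultimately show ?thesis by (rule lin_aux3)
qed

lemma SS4: "SS 4 < Bf 4"
proof -
  have g3: "Gamma (3::real) = 2"
    using Gamma_fact[of 2, where 'a=real] by (simp add: numeral_eq_Suc)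
  have s: "SS 4 = ln (Gamma 3) - (4+1)/2 * (ln 4 - ln 2) + 4/2 - (ln 2 + ln pi)/2"
    by (rule SS_alt) simp_all
  have l4: "ln (4::real) = 2 * ln 2" using ln_realpow[of 2 2] by simp
  have pp: "PP 4 = 56309" unfolding PP_def by simp
  have "exp 4 = exp (1::real) ^ 4" using exp_of_nat_mult[of 4 "1::real"] by simp
  also have "\<dots> \<le> (5837465777 / 2147483648 + inverse (2 ^ 32)) ^ 4"
    by (rule power_mono[OF e_upper]) simp
  finally have "exp 4 * 3240 \<le> (5837465777 / 2147483648 + inverse (2 ^ 32)) ^ 4 * (3240::real)" by simp
  also have "\<dots> < 56309 * 3.141592653588" by (simp add: power_divide)
  also have "\<dots> \<le> 56309 * pi" using pi_approx by simp
  finally have "ln (exp 4 * 3240) < ln (56309 * pi)" by simp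
  hence "4 + ln 3240 < ln 56309 + ln pi" by (simp add: ln_mult)
  moreover have "ln (3240::real) = ln 4 + ln 810"
    using ln_mult[of 4 "810::real"] by simp
  moreover have "SS 4 - Bf 4 = (4 + 2*ln 2 + ln 810 - ln 56309 - ln pi)/2"
    unfolding s g3 Bf_def pp l4 by (simp add: field_simps)
  ultimately show ?thesis using l4 by (rule lin_aux4)
qed



lemma lower_conv: fixes n :: nat assumes n: "n \<ge> 1" and h: "SS (real n) < Bf (real n)"
  shows "1 / sqrt (pi * (real n + theta n)) * (2 * pi * exp 1 / real n) powr (real n / 2) < Omega n"
proof -
  define x where "x = real n"
  have x: "x > 0" using n x_def by simp
  have pp: "PP x > 0" using PP_pos[of x] n x_def by simp
  have th: "real n + theta n = PP x / (810 * x^2)"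
    unfolding theta_def PP_def x_def[symmetric] using x by (simp add: field_simps power2_eq_square power3_eq_cube)
  have y: "pi * (real n + theta n) > 0" unfolding th using pp x by simp
  have yy: "real n + theta n > 0" unfolding th using pp x by simp
  have ly: "ln (pi * (real n + theta n)) = ln pi + ln (PP x) - ln 810 - 2 * ln x"
  proof -
    have "ln (pi * (real n + theta n)) = ln pi + ln (PP x / (810 * x^2))" unfolding th
      by (rule ln_mult_pos) (use pp x in auto)
    also have "ln (PP x / (810 * x^2)) = ln (PP x) - ln (810 * x^2)" using pp x by (simp add: ln_div)
    also have "ln (810 * x^2) = ln 810 + 2 * ln x" using x by (simp add: ln_mult_pos ln_realpow)
    finally show ?thesis by simp
  qed
  have z: "2 * pi * exp 1 / real n > 0" using x x_def by simp
  have lz: "ln (2 * pi * exp 1 / real n) = ln 2 + ln pi + 1 - ln x"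
    unfolding x_def[symmetric] using x by (simp add: ln_div ln_mult_pos)
  have G: "Gamma (x/2+1) > 0" using x by simp
  have lG: "ln (Gamma (x/2+1)) = SS x + (x+1)/2 * (ln x - ln 2) - x/2 + (ln 2 + ln pi)/2"
    using SS_alt[of x "x/2+1"] x by simp
  have Lpos: "1 / sqrt (pi * (real n + theta n)) * (2 * pi * exp 1 / real n) powr (real n / 2) > 0"
    using y z n by (intro mult_pos_pos divide_pos_pos) auto
  have Opos: "Omega n > 0" unfolding Omega_def using G x_def by simp
  have lL: "ln (1 / sqrt (pi * (real n + theta n)) * (2 * pi * exp 1 / real n) powr (real n / 2))
      = - ln (pi * (real n + theta n)) / 2 + x/2 * ln (2 * pi * exp 1 / real n)"
    using y z n yy unfolding x_def by (simp add: ln_mult_pos ln_div ln_sqrt; argo)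
  have lO: "ln (Omega n) = x/2 * ln pi - ln (Gamma (x/2+1))"
  proof -
    have G': "Gamma (real n/2+1) > 0" by simp
    show ?thesis unfolding Omega_def x_def using G' by (simp add: ln_div less_imp_neq[OF G', symmetric])
  qed
  have d: "ln (Omega n) - ln (1 / sqrt (pi * (real n + theta n)) * (2 * pi * exp 1 / real n) powr (real n / 2))
     = Bf x - SS x"
    unfolding lL lO ly lz lG Bf_def by (simp add: field_simps)
  have "ln (1 / sqrt (pi * (real n + theta n)) * (2 * pi * exp 1 / real n) powr (real n / 2)) < ln (Omega n)"
    using d h unfolding x_def by argo
  thus ?thesis using Lpos Opos by simp
qed

lemma upper_conv: fixes n :: nat assumes n: "n \<ge> 1" and h: "Cf (real n) < SS (real n)"
  shows "Omega n < 1 / sqrt (pi * (real n + nu n)) * (2 * pi * exp 1 / real n) powr (real n / 2)"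
proof -
  define x where "x = real n"
  have x: "x > 0" using n x_def by simp
  have pp: "QQ x > 0" using QQ_pos[of x] n x_def by simp
  have th: "real n + nu n = QQ x / (9720 * x^3)"
    unfolding nu_def theta_def QQ_def x_def[symmetric] using x by (simp add: field_simps power2_eq_square power3_eq_cube eval_nat_numeral)
  have y: "pi * (real n + nu n) > 0" unfolding th using pp x by simp
  have yy: "real n + nu n > 0" unfolding th using pp x by simp
  have ly: "ln (pi * (real n + nu n)) = ln pi + ln (QQ x) - ln 9720 - 3 * ln x"
  proof -
    have "ln (pi * (real n + nu n)) = ln pi + ln (QQ x / (9720 * x^3))" unfolding th
      by (rule ln_mult_pos) (use pp x in auto)
    also have "ln (QQ x / (9720 * x^3)) = ln (QQ x) - ln (9720 * x^3)" using pp x by (simp add: ln_div)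
    also have "ln (9720 * x^3) = ln 9720 + 3 * ln x" using x by (simp add: ln_mult_pos ln_realpow)
    finally show ?thesis by simp
  qed
  have z: "2 * pi * exp 1 / real n > 0" using x x_def by simp
  have lz: "ln (2 * pi * exp 1 / real n) = ln 2 + ln pi + 1 - ln x"
    unfolding x_def[symmetric] using x by (simp add: ln_div ln_mult_pos)
  have G: "Gamma (x/2+1) > 0" using x by simp
  have lG: "ln (Gamma (x/2+1)) = SS x + (x+1)/2 * (ln x - ln 2) - x/2 + (ln 2 + ln pi)/2"
    using SS_alt[of x "x/2+1"] x by simp
  have Lpos: "1 / sqrt (pi * (real n + nu n)) * (2 * pi * exp 1 / real n) powr (real n / 2) > 0"
    using y z n by (intro mult_pos_pos divide_pos_pos) auto
  have Opos: "Omega n > 0" unfolding Omega_def using G x_def by simp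
  have lL: "ln (1 / sqrt (pi * (real n + nu n)) * (2 * pi * exp 1 / real n) powr (real n / 2))
      = - ln (pi * (real n + nu n)) / 2 + x/2 * ln (2 * pi * exp 1 / real n)"
    using y z n yy unfolding x_def by (simp add: ln_mult_pos ln_div ln_sqrt; argo)
  have lO: "ln (Omega n) = x/2 * ln pi - ln (Gamma (x/2+1))"
  proof -
    have G': "Gamma (real n/2+1) > 0" by simp
    show ?thesis unfolding Omega_def x_def using G' by (simp add: ln_div less_imp_neq[OF G', symmetric])
  qed
  have d: "ln (Omega n) - ln (1 / sqrt (pi * (real n + nu n)) * (2 * pi * exp 1 / real n) powr (real n / 2))
     = Cf x - SS x"
    unfolding lL lO ly lz lG Cf_def by (simp add: field_simps)
  have "ln (Omega n) < ln (1 / sqrt (pi * (real n + nu n)) * (2 * pi * exp 1 / real n) powr (real n / 2))"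
    using d h unfolding x_def by argo
  thus ?thesis using Lpos Opos by simp
qed

theorem theorem3:
  shows "(\<forall>n::nat. n \<ge> 3 \<longrightarrow>
            1 / sqrt (pi * (real n + theta n)) * (2 * pi * exp 1 / real n) powr (real n / 2) < Omega n)
       \<and> (\<forall>n::nat. n \<ge> 1 \<longrightarrow>
            Omega n < 1 / sqrt (pi * (real n + nu n)) * (2 * pi * exp 1 / real n) powr (real n / 2))"
proof (intro conjI allI impI)
  fix n :: nat assume n: "n \<ge> 3"
  have "SS (real n) < Bf (real n)"
  proof (cases "n \<ge> 5")
    case True thus ?thesis by (rule SS_lt_Bf)
  next
    case False
    with n have "n = 3 \<or> n = 4" by auto
    thus ?thesis using SS3 SS4 by auto
  qed
  thus "1 / sqrt (pi * (real n + theta n)) * (2 * pi * exp 1 / real n) powr (real n / 2) < Omega n"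
    using n by (intro lower_conv) auto
next
  fix n :: nat assume n: "n \<ge> 1"
  show "Omega n < 1 / sqrt (pi * (real n + nu n)) * (2 * pi * exp 1 / real n) powr (real n / 2)"
    using n Cf_lt_SS[OF n] by (intro upper_conv) auto
qed

end
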